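(* Let $f:\mathbb{R}^d\to\mathbb{R}$ be differentiable, let $k\in\mathbb{N}$, let $x_0,\dots,x_k\in\mathbb{R}^d$, $B_k\in\mathbb{S}^d$, and $\sigma,\delta>0$. Define $$m_k(s):=\Big\langle \nabla f(x_k)+\frac{1}{k+1}\sum_{i=0}^k(2i+1)\nabla f(x_i),\,s\Big\rangle+\frac12\langle B_ks,s\rangle+\frac{\sigma}{4}\|s\|^4.$$ Suppose $s_k\in\mathbb{R}^d$ satisfies $\|\nabla m_k(s_k)\|\le\delta\|s_k\|$, and set $x_{k+1}:=x_k+s_k$, $r_k:=\nabla f(x_{k+1})-\nabla f(x_k)-B_ks_k$, and $$\bar g_{k+1}:=\frac{1}{(k+1)(k+2)}\Big(\sum_{i=0}^{k}(2i+1)\nabla f(x_i)+(k+1)\nabla f(x_{k+1})\Big).$$ Then $$\big\|(k+2)\bar g_{k+1}+\sigma\|s_k\|^2s_k\big\|\le\|r_k\|+\delta\|s_k\|.$$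
   Context: $\mathbb{S}^d$ denotes the set of real symmetric $d\times d$ matrices; $\|\cdot\|$ is the Euclidean norm. *)

theory Defs
  imports "HOL-Analysis.Analysis"
begin

definition grad :: "('a::real_inner \<Rightarrow> real) \<Rightarrow> 'a \<Rightarrow> 'a" where
  "grad f x = (THE D. GDERIV f x :> D)"

end

theory Submission
  imports Defs
begin

lemma grad_eqI:
  fixes m :: "'a::euclidean_space \<Rightarrow> real"
  assumes "(m has_derivative (\<lambda>h. h \<bullet> D)) (at s)"
  shows "grad m s = D"
  unfolding grad_def
proof (rule the_equality)
  show "GDERIV m s :> D" using assms by (simp add: gderiv_def)
next
  fix D' assume "GDERIV m s :> D'"
  hence "(m has_derivative (\<lambda>h. h \<bullet> D')) (at s)" by (simp add: gderiv_def)
  hence "(\<lambda>h. h \<bullet> D') = (\<lambda>h. h \<bullet> D)" using assms has_derivative_unique by blast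
  hence "(D' - D) \<bullet> D' = (D' - D) \<bullet> D" by metis
  hence "(D' - D) \<bullet> (D' - D) = 0" by (simp add: inner_diff_right)
  thus "D' = D" by simp
qed

theorem lemma3p1:
  fixes f :: "real^'d \<Rightarrow> real"
    and k :: nat
    and x :: "nat \<Rightarrow> real^'d"
    and B :: "real^'d^'d"
    and \<sigma> \<delta> :: real
    and s :: "real^'d"
  assumes diff: "\<And>y. f differentiable (at y)"
    and symB: "transpose B = B"
    and sigma_pos: "\<sigma> > 0"
    and delta_pos: "\<delta> > 0"
  defines "m \<equiv> (\<lambda>u::real^'d.
              (grad f (x k) + (1 / real (k+1)) *\<^sub>R (\<Sum>i=0..k. real (2*i+1) *\<^sub>R grad f (x i))) \<bullet> u
              + (1/2) * ((B *v u) \<bullet> u) + (\<sigma> / 4) * norm u ^ 4)"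
  assumes step: "norm (grad m s) \<le> \<delta> * norm s"
  defines "x1 \<equiv> x k + s"
  defines "r \<equiv> grad f x1 - grad f (x k) - B *v s"
  defines "gbar \<equiv> (1 / (real (k+1) * real (k+2))) *\<^sub>R
              ((\<Sum>i=0..k. real (2*i+1) *\<^sub>R grad f (x i)) + real (k+1) *\<^sub>R grad f x1)"
  shows "norm (real (k+2) *\<^sub>R gbar + (\<sigma> * norm s ^ 2) *\<^sub>R s) \<le> norm r + \<delta> * norm s"
proof -
  define S where "S = (\<Sum>i=0..k. real (2*i+1) *\<^sub>R grad f (x i))"
  define G where "G = grad f (x k) + (1 / real (k+1)) *\<^sub>R S"
  define D where "D = G + B *v s + (\<sigma> * norm s ^ 2) *\<^sub>R s"
  have meq: "m = (\<lambda>u. G \<bullet> u + (1/2) * ((B *v u) \<bullet> u) + (\<sigma> / 4) * (u \<bullet> u)^2)"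
    unfolding m_def G_def S_def by (simp add: power2_norm_eq_inner[symmetric] power_mult[symmetric])
  have Bt: "\<And>h. (B *v h) \<bullet> s = h \<bullet> (B *v s)"
    by (metis dot_lmul_matrix vector_transpose_matrix symB)
  have Bd: "((*v) B has_derivative (*v) B) (at s)"
    by (rule bounded_linear.has_derivative[OF matrix_vector_mul_bounded_linear has_derivative_ident])
  have "(m has_derivative (\<lambda>h. h \<bullet> D)) (at s)"
    unfolding meq
    apply (rule derivative_eq_intros Bd refl | simp)+
    apply (rule ext)
    apply (simp add: D_def Bt inner_add_right inner_commute algebra_simps power2_norm_eq_inner)
    apply (metis Bt inner_commute)
    done
  hence gm: "grad m s = D" by (rule grad_eqI)
  have "real (k+2) *\<^sub>R gbar = (1 / real (k+1)) *\<^sub>R S + grad f x1"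
  proof -
    have c1: "real (k+2) * (1 / (real (k+1) * real (k+2))) = 1 / real (k+1)"
      by (simp del: of_nat_Suc of_nat_add)
    have c2: "real (k+2) * (1 / (real (k+1) * real (k+2)) * real (k+1)) = 1"
      by (simp del: of_nat_Suc of_nat_add)
    show ?thesis unfolding gbar_def S_def[symmetric] scaleR_add_right scaleR_scaleR c1
      by (simp only: c2 scaleR_one)
  qed
  hence "real (k+2) *\<^sub>R gbar + (\<sigma> * norm s ^ 2) *\<^sub>R s = grad m s + r"
    unfolding gm D_def G_def r_def by (simp add: algebra_simps)
  hence "norm (real (k+2) *\<^sub>R gbar + (\<sigma> * norm s ^ 2) *\<^sub>R s) \<le> norm (grad m s) + norm r"
    by (simp add: norm_triangle_ineq)
  thus ?thesis using step by linarith
qed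

end
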